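(* Let $m=n+1$. Then every instance with $n$ agents with monotone valuations and $m$ goods has at least $n$ EFX allocations, and there exists an instance with $n$ agents with additive valuations and $m$ goods that has exactly $n$ EFX allocations. *)

theory Defs
  imports Complex_Main
begin

definition monotone_valuation :: "nat set \<Rightarrow> (nat set \<Rightarrow> real) \<Rightarrow> bool" where
  "monotone_valuation M val \<longleftrightarrow> val {} = 0 \<and> (\<forall>S T. S \<subseteq> T \<and> T \<subseteq> M \<longrightarrow> val S \<le> val T)"

definition additive_valuation :: "nat set \<Rightarrow> (nat set \<Rightarrow> real) \<Rightarrow> bool" where
  "additive_valuation M val \<longleftrightarrow> (\<forall>g\<in>M. val {g} \<ge> 0) \<and> (\<forall>S. S \<subseteq> M \<longrightarrow> val S = (\<Sum>g\<in>S. val {g}))"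

(* A (complete) allocation: a partition of the goods {0..<m} into bundles A 0, ..., A (n-1);
   bundles of non-agents are empty so that allocations are counted exactly once. *)
definition allocation :: "nat \<Rightarrow> nat \<Rightarrow> (nat \<Rightarrow> nat set) \<Rightarrow> bool" where
  "allocation n m A \<longleftrightarrow>
     (\<forall>i<n. A i \<subseteq> {0..<m}) \<and>
     (\<forall>i<n. \<forall>j<n. i \<noteq> j \<longrightarrow> A i \<inter> A j = {}) \<and>
     (\<Union>i<n. A i) = {0..<m} \<and>
     (\<forall>i. i \<ge> n \<longrightarrow> A i = {})"

definition EFX :: "nat \<Rightarrow> (nat \<Rightarrow> nat set \<Rightarrow> real) \<Rightarrow> (nat \<Rightarrow> nat set) \<Rightarrow> bool" where
  "EFX n v A \<longleftrightarrow> (\<forall>i<n. \<forall>j<n. i \<noteq> j \<longrightarrow> (\<forall>g\<in>A j. v i (A i) \<ge> v i (A j - {g})))"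

definition EFX_allocations :: "nat \<Rightarrow> nat \<Rightarrow> (nat \<Rightarrow> nat set \<Rightarrow> real) \<Rightarrow> (nat \<Rightarrow> nat set) set" where
  "EFX_allocations n m v = {A. allocation n m A \<and> EFX n v A}"

end

theory Submission
  imports Defs
begin

lemma greedy:
  fixes u :: "nat \<Rightarrow> nat \<Rightarrow> real"
  assumes "finite I"
  shows "finite G \<Longrightarrow> card I \<le> card G \<Longrightarrow>
    \<exists>f. inj_on f I \<and> f ` I \<subseteq> G \<and> (\<forall>i\<in>I. \<forall>g\<in>G - f ` I. u i g \<le> u i (f i))"
  using assms
proof (induction I arbitrary: G rule: finite_induct)
  case empty
  then show ?case by auto
next
  case (insert x I)
  have finG: "finite G" and cG: "Suc (card I) \<le> card G"
    using insert.prems insert.hyps by auto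
  have "G \<noteq> {}" using cG by auto
  obtain g0 where g0: "g0 \<in> G" "\<forall>g\<in>G. u x g \<le> u x g0"
  proof -
    let ?M = "Max ((\<lambda>g. u x g) ` G)"
    have "?M \<in> (\<lambda>g. u x g) ` G" using \<open>G \<noteq> {}\<close> finG by (intro Max_in) simp_all
    then obtain g0 where "g0 \<in> G" "u x g0 = ?M" by force
    moreover have "\<forall>g\<in>G. u x g \<le> ?M" using finG by simp
    ultimately show ?thesis using that by metis
  qed
  have "card (G - {g0}) = card G - 1" using g0 finG by simp
  then have "card I \<le> card (G - {g0})" using cG by linarith
  moreover have "finite (G - {g0})" using finG by simp
  ultimately obtain f where f: "inj_on f I" "f ` I \<subseteq> G - {g0}"
     "\<forall>i\<in>I. \<forall>g\<in>G - {g0} - f ` I. u i g \<le> u i (f i)"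
    using insert.IH[of "G - {g0}"] by blast
  define f' where "f' = f(x := g0)"
  have eqI: "f' ` I = f ` I" unfolding f'_def using insert.hyps by auto
  have "inj_on f' (insert x I)"
  proof -
    have "inj_on f' I" using f(1) insert.hyps unfolding f'_def
      by (metis fun_upd_other inj_on_cong)
    moreover have "f' x \<notin> f' ` I" using eqI f(2) unfolding f'_def by auto
    ultimately show ?thesis by auto
  qed
  moreover have "f' ` insert x I \<subseteq> G" using eqI f(2) g0 unfolding f'_def by auto
  moreover have "\<forall>i\<in>insert x I. \<forall>g\<in>G - f' ` insert x I. u i (g) \<le> u i (f' i)"
  proof (intro ballI)
    fix i g assume i: "i \<in> insert x I" and g: "g \<in> G - f' ` insert x I"
    have gg: "g \<in> G - {g0} - f ` I" using g eqI unfolding f'_def by auto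
    show "u i g \<le> u i (f' i)"
    proof (cases "i = x")
      case True then show ?thesis using g0 gg unfolding f'_def by auto
    next
      case False then have "i \<in> I" using i by auto
      then show ?thesis using f(3) gg False unfolding f'_def by auto
    qed
  qed
  ultimately show ?case by blast
qed

lemma card2_diff: "card S = 2 \<Longrightarrow> g \<in> S \<Longrightarrow> \<exists>h\<in>S. S - {g} = {h}"
  by (auto simp: card_2_iff)

lemma finite_EFX: "finite (EFX_allocations n m v)"
proof -
  have "EFX_allocations n m v \<subseteq> {A. \<forall>x. (x \<in> {..<n} \<longrightarrow> A x \<in> Pow {0..<m}) \<and> (x \<notin> {..<n} \<longrightarrow> A x = {})}"
    unfolding EFX_allocations_def allocation_def by auto
  moreover have "finite {A. \<forall>x. (x \<in> {..<n} \<longrightarrow> A x \<in> Pow {0..<m}) \<and> (x \<notin> {..<n} \<longrightarrow> A x = {})}"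
    by (rule finite_set_of_finite_funs) auto
  ultimately show ?thesis by (rule finite_subset)
qed

lemma part1:
  fixes v :: "nat \<Rightarrow> nat set \<Rightarrow> real"
  assumes mono: "\<forall>i<n. monotone_valuation {0..<n+1} (v i)" and k: "k < n"
  shows "\<exists>A. A \<in> EFX_allocations n (n+1) v \<and> card (A k) = 2 \<and> (\<forall>i<n. i \<noteq> k \<longrightarrow> card (A i) = 1)"
proof -
  define I where "I = {0..<n} - {k}"
  define G where "G = {0..<n+1}"
  have cI: "card I = n - 1" unfolding I_def using k by auto
  obtain f where f: "inj_on f I" "f ` I \<subseteq> G" "\<forall>i\<in>I. \<forall>g\<in>G - f ` I. v i {g} \<le> v i {f i}"
  proof -
    have "finite I" "finite G" "card I \<le> card G" using cI unfolding I_def G_def by auto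
    then show ?thesis using greedy[of I G "\<lambda>i g. v i {g}"] that by blast
  qed
  define R where "R = G - f ` I"
  have cR: "card R = 2"
  proof -
    have "card (f ` I) = n - 1" using f(1) cI by (simp add: card_image)
    then show ?thesis unfolding R_def using f(2) k
      by (subst card_Diff_subset) (auto simp: G_def finite_subset)
  qed
  define A where "A = (\<lambda>i. if i < n then (if i = k then R else {f i}) else {})"
  have mv: "\<And>i S T. i < n \<Longrightarrow> S \<subseteq> T \<Longrightarrow> T \<subseteq> G \<Longrightarrow> v i S \<le> v i T"
    using mono unfolding monotone_valuation_def G_def by blast
  have v0: "\<And>i. i < n \<Longrightarrow> v i {} = 0"
    using mono unfolding monotone_valuation_def by blast
  have AG: "\<And>i. i < n \<Longrightarrow> A i \<subseteq> G" unfolding A_def R_def I_def using f(2) I_def by auto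
  have alloc: "allocation n (n+1) A"
    unfolding allocation_def
  proof (intro conjI allI impI)
    fix i assume "i < n" then show "A i \<subseteq> {0..<n+1}" using AG G_def by auto
  next
    fix i j assume "i < n" "j < n" "i \<noteq> j"
    then show "A i \<inter> A j = {}" using f(1) inj_onD[OF f(1), of i j]
      by (auto simp: A_def R_def I_def)
  next
    show "(\<Union>i<n. A i) = {0..<n+1}"
    proof
      show "(\<Union>i<n. A i) \<subseteq> {0..<n+1}" using AG G_def by auto
    next
      show "{0..<n+1} \<subseteq> (\<Union>i<n. A i)"
      proof
        fix g assume "g \<in> {0..<n+1}"
        show "g \<in> (\<Union>i<n. A i)"
        proof (cases "g \<in> f ` I")
          case True then obtain i where "i \<in> I" "g = f i" by auto
          then show ?thesis unfolding A_def I_def by auto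
        next
          case False then have "g \<in> A k" unfolding A_def R_def G_def using k \<open>g \<in> {0..<n+1}\<close> by auto
          then show ?thesis using k by auto
        qed
      qed
    qed
  next
    fix i assume "n \<le> i" then show "A i = {}" unfolding A_def by auto
  qed
  have efx: "EFX n v A"
    unfolding EFX_def
  proof (intro allI impI ballI)
    fix i j g assume ij: "i < n" "j < n" "i \<noteq> j" and g: "g \<in> A j"
    show "v i (A j - {g}) \<le> v i (A i)"
    proof (cases "j = k")
      case False
      then have e: "A j - {g} = {}" using g ij unfolding A_def by auto
      show ?thesis unfolding e using v0[OF ij(1)] mv[OF ij(1), of "{}" "A i"] AG[OF ij(1)] by simp
    next
      case True
      then obtain h where h: "h \<in> R" "A j - {g} = {h}" using card2_diff[OF cR] g ij unfolding A_def by auto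
      have iI: "i \<in> I" using ij True unfolding I_def by auto
      have "v i {h} \<le> v i {f i}" using f(3) iI h(1) unfolding R_def by auto
      then show ?thesis using h ij True unfolding A_def by auto
    qed
  qed
  have "card (A k) = 2" using cR k unfolding A_def by simp
  moreover have "\<forall>i<n. i \<noteq> k \<longrightarrow> card (A i) = 1" unfolding A_def by simp
  moreover have "A \<in> EFX_allocations n (n+1) v" using alloc efx unfolding EFX_allocations_def by simp
  ultimately show ?thesis by blast
qed

definition wt :: "nat \<Rightarrow> nat \<Rightarrow> nat \<Rightarrow> real" where
  "wt n i g = (if g = i then 3 else if g = n then 2 else 1)"

definition V :: "nat \<Rightarrow> nat \<Rightarrow> nat set \<Rightarrow> real" where
  "V n i S = (\<Sum>g\<in>S. wt n i g)"

definition FA :: "nat \<Rightarrow> nat \<Rightarrow> nat \<Rightarrow> nat set" where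
  "FA n k i = (if i < n then (if i = k then {k, n} else {i}) else {})"

lemma V_single[simp]: "V n i {g} = wt n i g" by (simp add: V_def)

lemma V_pos: "finite S \<Longrightarrow> S \<noteq> {} \<Longrightarrow> V n i S > 0"
  unfolding V_def by (rule sum_pos) (auto simp: wt_def)

lemma V_empty[simp]: "V n i {} = 0" by (simp add: V_def)

lemma additive_V: "additive_valuation M (V n i)"
  unfolding additive_valuation_def V_def by (auto simp: wt_def)

lemma FA_in: "k < n \<Longrightarrow> FA n k \<in> EFX_allocations n (n+1) (V n)"
  unfolding EFX_allocations_def
proof (intro CollectI conjI)
  assume k: "k < n"
  show "allocation n (n + 1) (FA n k)"
    unfolding allocation_def
  proof (intro conjI allI impI)
    show "(\<Union>i<n. FA n k i) = {0..<n + 1}"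
    proof
      show "(\<Union>i<n. FA n k i) \<subseteq> {0..<n + 1}" by (auto simp: FA_def split: if_splits)
      show "{0..<n + 1} \<subseteq> (\<Union>i<n. FA n k i)"
      proof
        fix g assume "g \<in> {0..<n+1}"
        then have "g < n \<or> g = n" by auto
        then show "g \<in> (\<Union>i<n. FA n k i)"
        proof
          assume "g < n" then show ?thesis by (intro UN_I[of g]) (auto simp: FA_def)
        next
          assume "g = n" then show ?thesis using k by (intro UN_I[of k]) (auto simp: FA_def)
        qed
      qed
    qed
  qed (auto simp: FA_def)
  show "EFX n (V n) (FA n k)"
    unfolding EFX_def
  proof (intro allI impI ballI)
    fix i j g assume ij: "i < n" "j < n" "i \<noteq> j" and g: "g \<in> FA n k j"
    show "V n i (FA n k j - {g}) \<le> V n i (FA n k i)"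
    proof (cases "j = k")
      case False
      then have e: "FA n k j - {g} = {}" using g ij by (auto simp: FA_def)
      show ?thesis unfolding e using V_pos[of "FA n k i" n i] by (auto simp: FA_def)
    next
      case True
      then have "FA n k j - {g} = {k} \<or> FA n k j - {g} = {n}" using g ij by (auto simp: FA_def)
      moreover have "FA n k i = {i}" using ij True by (auto simp: FA_def)
      ultimately show ?thesis using ij True by (auto simp: wt_def)
    qed
  qed
qed

lemma EFX_sub:
  assumes "A \<in> EFX_allocations n (n+1) (V n)"
  shows "\<exists>k<n. A = FA n k"
proof -
  have al: "allocation n (n+1) A" and ef: "EFX n (V n) A"
    using assms unfolding EFX_allocations_def by auto
  have sub: "\<And>i. i < n \<Longrightarrow> A i \<subseteq> {0..<n+1}" using al unfolding allocation_def by auto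
  have dis: "\<And>i j. i < n \<Longrightarrow> j < n \<Longrightarrow> i \<noteq> j \<Longrightarrow> A i \<inter> A j = {}"
    using al unfolding allocation_def by auto
  have un: "(\<Union>i<n. A i) = {0..<n+1}" using al unfolding allocation_def by auto
  have out: "\<And>i. n \<le> i \<Longrightarrow> A i = {}" using al unfolding allocation_def by auto
  have efx: "\<And>i j g. i < n \<Longrightarrow> j < n \<Longrightarrow> i \<noteq> j \<Longrightarrow> g \<in> A j \<Longrightarrow> V n i (A j - {g}) \<le> V n i (A i)"
    using ef unfolding EFX_def by auto
  have fin: "\<And>i. i < n \<Longrightarrow> finite (A i)" using sub finite_subset by blast
  have sum: "(\<Sum>i<n. card (A i)) = n + 1"
  proof -
    have "card (\<Union>i<n. A i) = (\<Sum>i<n. card (A i))"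
      by (rule card_UN_disjoint) (use fin dis in auto)
    then show ?thesis using un by simp
  qed
  obtain k where k: "k < n" "card (A k) \<ge> 2"
  proof (rule ccontr)
    assume "\<not> thesis"
    then have "\<forall>i<n. card (A i) \<le> 1" using that by force
    then have "(\<Sum>i<n. card (A i)) \<le> (\<Sum>i<n. 1)" by (intro sum_mono) auto
    then show False using sum by simp
  qed
  have ge1: "card (A i) \<ge> 1" if i: "i < n" for i
  proof (rule ccontr)
    assume "\<not> card (A i) \<ge> 1"
    then have e: "A i = {}" using fin[OF i] card_0_eq[of "A i"] by linarith
    then have "i \<noteq> k" using k by auto
    obtain g where g: "g \<in> A k" using k by fastforce
    have "card (A k - {g}) \<ge> 1" using k g fin[OF k(1)] by auto
    then have "A k - {g} \<noteq> {}" by (metis card.empty not_one_le_zero)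
    then have "V n i (A k - {g}) > 0" using fin[OF k(1)] V_pos by auto
    moreover have "V n i (A k - {g}) \<le> V n i (A i)" using efx[OF i k(1) \<open>i \<noteq> k\<close> g] .
    ultimately show False using e by simp
  qed
  have sk: "(\<Sum>i<n. card (A i)) = card (A k) + (\<Sum>i\<in>{..<n} - {k}. card (A i))"
    using k by (subst sum.remove[of _ k]) auto
  have low: "(\<Sum>i\<in>B. card (A i)) \<ge> card B" if "B \<subseteq> {..<n}" for B
  proof -
    have "(\<Sum>i\<in>B. card (A i)) \<ge> (\<Sum>i\<in>B. 1)" using that ge1 by (intro sum_mono) auto
    then show ?thesis by simp
  qed
  have ck: "card (A k) = 2"
  proof -
    have "card ({..<n} - {k}) = n - 1" using k by auto
    then show ?thesis using low[of "{..<n} - {k}"] sk sum k by auto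
  qed
  have c1: "card (A i) = 1" if i: "i < n" "i \<noteq> k" for i
  proof -
    have "(\<Sum>j\<in>{..<n} - {k}. card (A j)) = card (A i) + (\<Sum>j\<in>{..<n} - {k} - {i}. card (A j))"
      using i by (subst sum.remove[of _ i]) auto
    moreover have "card ({..<n} - {k} - {i}) = n - 2" using i k by (auto simp: card_Diff_singleton)
    moreover have "(\<Sum>j\<in>{..<n} - {k} - {i}. card (A j)) \<ge> card ({..<n} - {k} - {i})"
      by (rule low) auto
    ultimately show ?thesis using sk sum ck ge1[OF i(1)] i k by linarith
  qed
  have claim1: "h = k" if h: "h \<in> A k" "h < n" for h
  proof (rule ccontr)
    assume hk: "h \<noteq> k"
    obtain g where g: "g \<in> A k" "g \<noteq> h" using ck h by (auto simp: card_2_iff)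
    have e: "A k - {g} = {h}" using ck g h by (auto simp: card_2_iff)
    obtain x where x: "A h = {x}" using c1[OF h(2) hk] by (auto simp: card_1_singleton_iff)
    have "V n h (A k - {g}) \<le> V n h (A h)" using efx[OF h(2) k(1) hk g(1)] .
    then have "x = h" unfolding e x by (auto simp: wt_def split: if_splits)
    then show False using dis[OF h(2) k(1) hk] x h by auto
  qed
  have Ak: "A k = {k, n}"
  proof -
    have "A k \<subseteq> {k, n}" using claim1 sub[OF k(1)] by fastforce
    moreover obtain a b where "A k = {a, b}" "a \<noteq> b" using ck by (auto simp: card_2_iff)
    ultimately show ?thesis by auto
  qed
  have Ai: "A i = {i}" if i: "i < n" "i \<noteq> k" for i
  proof -
    obtain x where x: "A i = {x}" using c1[OF i] by (auto simp: card_1_singleton_iff)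
    have e: "A k - {k} = {n}" using Ak k by auto
    have "V n i (A k - {k}) \<le> V n i (A i)" using efx[OF i(1) k(1) i(2), of k] Ak by simp
    then have "x = i \<or> x = n" unfolding e x by (auto simp: wt_def split: if_splits)
    moreover have "x \<noteq> n" using dis[OF i(1) k(1) i(2)] x Ak by auto
    ultimately show ?thesis using x by auto
  qed
  have "A = FA n k"
  proof
    fix i show "A i = FA n k i"
      using Ak Ai out by (cases "i < n") (auto simp: FA_def)
  qed
  then show ?thesis using k by auto
qed


theorem proposition4:
  fixes n m :: nat
  assumes "m = n + 1"
  shows "(\<forall>v :: nat \<Rightarrow> nat set \<Rightarrow> real.
            (\<forall>i<n. monotone_valuation {0..<m} (v i)) \<longrightarrow> card (EFX_allocations n m v) \<ge> n)
       \<and> (\<exists>v :: nat \<Rightarrow> nat set \<Rightarrow> real.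
            (\<forall>i<n. additive_valuation {0..<m} (v i)) \<and> card (EFX_allocations n m v) = n)"
proof
  show "\<forall>v :: nat \<Rightarrow> nat set \<Rightarrow> real.
            (\<forall>i<n. monotone_valuation {0..<m} (v i)) \<longrightarrow> card (EFX_allocations n m v) \<ge> n"
  proof (intro allI impI)
    fix v :: "nat \<Rightarrow> nat set \<Rightarrow> real"
    assume mono: "\<forall>i<n. monotone_valuation {0..<m} (v i)"
    have "\<forall>k\<in>{..<n}. \<exists>A. A \<in> EFX_allocations n (n+1) v \<and> card (A k) = 2 \<and> (\<forall>i<n. i \<noteq> k \<longrightarrow> card (A i) = 1)"
      using part1[of n v] mono assms by auto
    then obtain P where P: "\<And>k. k \<in> {..<n} \<Longrightarrow> P k \<in> EFX_allocations n (n+1) v \<and> card (P k k) = 2 \<and> (\<forall>i<n. i \<noteq> k \<longrightarrow> card (P k i) = 1)"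
      by metis
    have inj: "inj_on P {..<n}"
    proof (rule inj_onI)
      fix a b assume a: "a \<in> {..<n}" and b: "b \<in> {..<n}" and e: "P a = P b"
      show "a = b"
      proof (rule ccontr)
        assume "a \<noteq> b"
        then have "card (P b a) = 1" using P[OF b] a by auto
        moreover have "card (P a a) = 2" using P[OF a] by auto
        ultimately show False using e by simp
      qed
    qed
    have "P ` {..<n} \<subseteq> EFX_allocations n m v" using P assms by auto
    then have "card (P ` {..<n}) \<le> card (EFX_allocations n m v)"
      by (intro card_mono finite_EFX)
    then show "card (EFX_allocations n m v) \<ge> n" using card_image[OF inj] by simp
  qed
next
  have eq: "EFX_allocations n m (V n) = FA n ` {..<n}"
    using EFX_sub FA_in assms by blast
  have inj: "inj_on (FA n) {..<n}"
  proof (rule inj_onI)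
    fix a b assume a: "a \<in> {..<n}" and b: "b \<in> {..<n}" and e: "FA n a = FA n b"
    then have "FA n a a = FA n b a" by simp
    then show "a = b" using a by (auto simp: FA_def split: if_splits)
  qed
  show "\<exists>v :: nat \<Rightarrow> nat set \<Rightarrow> real.
            (\<forall>i<n. additive_valuation {0..<m} (v i)) \<and> card (EFX_allocations n m v) = n"
    apply (rule exI[of _ "V n"])
    using additive_V eq card_image[OF inj] by simp
qed

end
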